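(* Let $p\in(0,1)$ and let $(\lambda_n)_{n\ge1}$ be a sequence with $\lambda_1=1$ and $0\le\lambda_n\le\lambda_{n-1}$ for all $n>1$. Let $r_1,r_2,\dots$ be $\{0,1\}$-valued random variables with $\Pr(r_1=1)=p$ and, for every $n\ge2$, $\Pr(r_n=1\mid r_1,\dots,r_{n-1})=\lambda_n p+(1-\lambda_n)\bar p_{n-1}$, where $\bar p_m=\frac1m\sum_{i=1}^m r_i$. Then for every $n\ge2$, $\mathrm{Cov}[\bar p_{n-1},r_n]=(1-\lambda_n)\,\mathrm{Var}[\bar p_{n-1}]$. *)

theory Defs
  imports "HOL-Probability.Probability"
begin

text \<open>Random variables are indexed from 1: r 1, r 2, ...; only indices i \<ge> 1 are used.\<close>

definition pbar :: "(nat \<Rightarrow> 'a \<Rightarrow> real) \<Rightarrow> nat \<Rightarrow> 'a \<Rightarrow> real" where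
  "pbar r m x = (\<Sum>i=1..m. r i x) / real m"

definition hist :: "'a measure \<Rightarrow> (nat \<Rightarrow> 'a \<Rightarrow> real) \<Rightarrow> nat \<Rightarrow> 'a measure" where
  "hist M r n = sigma (space M)
     (\<Union>i\<in>{1..<n}. {r i -` A \<inter> space M | A. A \<in> sets borel})"

definition expect :: "'a measure \<Rightarrow> ('a \<Rightarrow> real) \<Rightarrow> real" where
  "expect M X = integral\<^sup>L M X"

definition covariance :: "'a measure \<Rightarrow> ('a \<Rightarrow> real) \<Rightarrow> ('a \<Rightarrow> real) \<Rightarrow> real" where
  "covariance M X Y = expect M (\<lambda>x. (X x - expect M X) * (Y x - expect M Y))"

definition var :: "'a measure \<Rightarrow> ('a \<Rightarrow> real) \<Rightarrow> real" where
  "var M X = expect M (\<lambda>x. (X x - expect M X)\<^sup>2)"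

end

theory Submission
  imports Defs
begin

theorem lemmaA3:
  fixes M :: "'a measure" and r :: "nat \<Rightarrow> 'a \<Rightarrow> real"
    and lam :: "nat \<Rightarrow> real" and p :: real
  assumes "prob_space M"
    and "0 < p" and "p < 1"
    and "lam 1 = 1"
    and "\<And>n. n > 1 \<Longrightarrow> 0 \<le> lam n \<and> lam n \<le> lam (n - 1)"
    and "\<And>i. i \<ge> 1 \<Longrightarrow> r i \<in> borel_measurable M"
    and "\<And>i x. i \<ge> 1 \<Longrightarrow> x \<in> space M \<Longrightarrow> r i x \<in> {0, 1}"
    and "measure M {x \<in> space M. r 1 x = 1} = p"
    and "\<And>n. n \<ge> 2 \<Longrightarrow>
           AE x in M. real_cond_exp M (hist M r n) (indicator {x \<in> space M. r n x = 1}) x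
                      = lam n * p + (1 - lam n) * pbar r (n - 1) x"
    and "n \<ge> 2"
  shows "covariance M (pbar r (n - 1)) (r n) = (1 - lam n) * var M (pbar r (n - 1))"
proof -
  interpret prob_space M by fact
  define F where "F = hist M r n"
  define G where "G = (\<Union>i\<in>{1..<n}. {r i -` A \<inter> space M | A. A \<in> sets borel})"
  have Gsub: "G \<subseteq> Pow (space M)" unfolding G_def by auto
  have GM: "G \<subseteq> sets M" unfolding G_def using assms(6) by (auto simp: measurable_def)
  have spF: "space F = space M" unfolding F_def hist_def G_def[symmetric]
    using Gsub by (simp add: space_measure_of_conv)
  have setsF: "sets F = sigma_sets (space M) G" unfolding F_def hist_def G_def[symmetric]
    using Gsub by simp
  have "sets F \<subseteq> sets M" unfolding setsF
    by (rule sets.sigma_sets_subset[OF GM])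
  then have subalg: "subalgebra M F" unfolding subalgebra_def using spF by simp
  interpret finite_measure_subalgebra M F
    by unfold_locales (rule subalg)
  have rF: "r i \<in> borel_measurable F" if "1 \<le> i" "i < n" for i
  proof (rule measurableI)
    fix A :: "real set" assume "A \<in> sets borel"
    then have "r i -` A \<inter> space M \<in> G" unfolding G_def using that by force
    then show "r i -` A \<inter> space F \<in> sets F" unfolding setsF spF by auto
  qed auto
  define X where "X = pbar r (n - 1)"
  define Y where "Y = (indicator {x \<in> space M. r n x = 1} :: 'a \<Rightarrow> real)"
  have XF: "X \<in> borel_measurable F" unfolding X_def pbar_def[abs_def]
    using rF assms(10) by (intro borel_measurable_divide borel_measurable_sum) auto
  have XM: "X \<in> borel_measurable M" by (rule measurable_from_subalg[OF subalg XF])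
  have rnM: "r n \<in> borel_measurable M" using assms(6,10) by simp
  have YM: "Y \<in> borel_measurable M" unfolding Y_def
    using rnM by (intro borel_measurable_indicator) measurable
  have Yr: "Y x = r n x" if "x \<in> space M" for x
    using assms(7)[of n x] that assms(10) unfolding Y_def by (auto simp: indicator_def)
  have Xb: "0 \<le> X x \<and> X x \<le> 1" if "x \<in> space M" for x
  proof -
    have h: "\<And>i. i \<in> {1..n-1} \<Longrightarrow> 0 \<le> r i x \<and> r i x \<le> 1"
      using assms(7) that by fastforce
    have "(\<Sum>i=1..n-1. r i x) \<le> (\<Sum>i=1..n-1. 1)" using h by (intro sum_mono) auto
    then have s1: "(\<Sum>i=1..n-1. r i x) \<le> real (n - 1)" by simp
    have s0: "0 \<le> (\<Sum>i=1..n-1. r i x)" using h by (intro sum_nonneg) auto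
    have "real (n - 1) > 0" using assms(10) by simp
    then show ?thesis unfolding X_def pbar_def using s0 s1 by (simp add: field_simps)
  qed
  have Yb: "0 \<le> Y x \<and> Y x \<le> 1" for x unfolding Y_def by (simp add: indicator_def)
  have intX: "integrable M X"
    by (rule integrable_const_bound[where B=1]) (use Xb XM in auto)
  have intY: "integrable M Y"
    by (rule integrable_const_bound[where B=1]) (use Yb YM in auto)
  have intXX: "integrable M (\<lambda>x. X x * X x)"
    by (rule integrable_const_bound[where B=1]) (use Xb XM in \<open>auto simp: abs_mult intro!: mult_le_one\<close>)
  have intXY: "integrable M (\<lambda>x. X x * Y x)"
    by (rule integrable_const_bound[where B=1]) (use Xb Yb XM YM in \<open>auto simp: abs_mult intro!: mult_le_one\<close>)
  define c where "c = lam n * p"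
  define d where "d = 1 - lam n"
  have AEZ: "AE x in M. real_cond_exp M F Y x = c + d * X x"
    using assms(9)[OF assms(10)] unfolding F_def Y_def X_def c_def d_def by simp
  have EXY: "expect M (\<lambda>x. X x * Y x) = c * expect M X + d * expect M (\<lambda>x. X x * X x)"
  proof -
    have "expect M (\<lambda>x. X x * Y x) = (\<integral>x. X x * real_cond_exp M F Y x \<partial>M)"
      unfolding expect_def using real_cond_exp_intg(2)[OF intXY XF YM] by simp
    also have "\<dots> = (\<integral>x. c * X x + d * (X x * X x) \<partial>M)"
      by (rule integral_cong_AE) (use AEZ XM in \<open>auto simp: algebra_simps\<close>)
    also have "\<dots> = c * expect M X + d * expect M (\<lambda>x. X x * X x)"
      unfolding expect_def using intX intXX by simp
    finally show ?thesis .
  qed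
  have EY: "expect M Y = c + d * expect M X"
  proof -
    have "expect M Y = (\<integral>x. real_cond_exp M F Y x \<partial>M)"
      unfolding expect_def using real_cond_exp_int(2)[OF intY] by simp
    also have "\<dots> = (\<integral>x. c + d * X x \<partial>M)"
      by (rule integral_cong_AE) (use AEZ XM in auto)
    also have "\<dots> = c + d * expect M X"
      unfolding expect_def using intX prob_space by simp
    finally show ?thesis .
  qed
  have Ern: "expect M (r n) = expect M Y"
    unfolding expect_def by (rule Bochner_Integration.integral_cong) (use Yr in auto)
  have cov: "covariance M X (r n) = expect M (\<lambda>x. X x * Y x) - expect M X * expect M Y"
  proof -
    have "covariance M X (r n) = expect M (\<lambda>x. (X x - expect M X) * (Y x - expect M Y))"
      unfolding covariance_def Ern unfolding expect_def
      by (rule Bochner_Integration.integral_cong) (use Yr in auto)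
    also have "\<dots> = expect M (\<lambda>x. X x * Y x - expect M Y * X x - expect M X * Y x
                     + expect M X * expect M Y)"
      by (simp add: algebra_simps)
    also have "\<dots> = expect M (\<lambda>x. X x * Y x) - expect M X * expect M Y"
      unfolding expect_def using intX intY intXY prob_space by simp
    finally show ?thesis .
  qed
  have vr: "var M X = expect M (\<lambda>x. X x * X x) - expect M X * expect M X"
  proof -
    have "var M X = expect M (\<lambda>x. X x * X x - 2 * expect M X * X x
                     + expect M X * expect M X)"
      unfolding var_def by (simp add: algebra_simps power2_eq_square)
    also have "\<dots> = expect M (\<lambda>x. X x * X x) - expect M X * expect M X"
      unfolding expect_def using intX intXX prob_space by simp
    finally show ?thesis .
  qed
  show ?thesis
    unfolding X_def[symmetric] cov vr EXY EY d_def[symmetric]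
    by (simp add: algebra_simps)
qed

end
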